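(* Let $\xi_k(x)=\xi_{k1}x_1+\xi_{k2}x_2+\xi_{k0}$, $k=0,1,2$, be affine functions on $\mathbb{R}^2$, let $E$ be a segment contained in the line $\{x_2=mx_1+q\}$, and assume $\xi_{21}+m\xi_{22}=0$ and $\xi_2>0$ on $E$. Let $h(x)=\frac{\xi_1(x)^2}{\xi_2(x)}+\xi_0(x)+I_E(x)$. Then every piece of the conjugate $h^*$ that is a quadratic polynomial $\zeta_{11}s_1^2+\zeta_{12}s_1s_2+\zeta_{22}s_2^2+\zeta_{10}s_1+\zeta_{01}s_2+\zeta_{00}$ is parabolic, i.e. satisfies $\zeta_{12}^2-4\zeta_{11}\zeta_{22}=0$.
   Context: $I_E$ is the indicator function of $E$ ($0$ on $E$, $+\infty$ outside). The conjugate is $h^*(s)=\sup_{x\in\mathbb{R}^2}(s^Tx-h(x))$, a piecewise function of $s=(s_1,s_2)\in\mathbb{R}^2$ whose pieces are affine or quadratic polynomials. Such rational functions $\xi_1^2/\xi_2+\xi_0$ arise as pieces of the convex envelope of a bivariate quadratic over a polytope, and the restriction to an edge of the polytope on which $\xi_{21}+m\xi_{22}=0$ is the case in which a quadratic expression appears in the conjugate. *)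

theory Defs
  imports "HOL-Analysis.Analysis" "HOL-Library.Extended_Real"
begin

definition ind_set :: "(real \<times> real) set \<Rightarrow> real \<times> real \<Rightarrow> ereal" where
  "ind_set E x = (if x \<in> E then 0 else \<infinity>)"

definition conjugate :: "(real \<times> real \<Rightarrow> ereal) \<Rightarrow> real \<times> real \<Rightarrow> ereal" where
  "conjugate h s = (SUP x. ereal (fst s * fst x + snd s * snd x) - h x)"

definition aff :: "real \<Rightarrow> real \<Rightarrow> real \<Rightarrow> real \<times> real \<Rightarrow> real" where
  "aff c1 c2 c0 x = c1 * fst x + c2 * snd x + c0"

end

theory Submission
  imports Defs
begin


lemma seg_const:
  fixes a b x :: "real \<times> real"
  assumes "x \<in> closed_segment a b"
  shows "(snd a - snd b) * fst x + (fst b - fst a) * snd x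
       = (snd a - snd b) * fst a + (fst b - fst a) * snd a"
proof -
  obtain u where x: "x = (1 - u) *\<^sub>R a + u *\<^sub>R b" using assms by (auto simp: in_segment)
  have f: "fst x = (1-u)*fst a + u*fst b" "snd x = (1-u) * snd a + u * snd b" using x by simp_all
  show ?thesis unfolding f by (simp add: algebra_simps)
qed

lemma conj_shift:
  fixes h :: "real \<times> real \<Rightarrow> ereal" and a b :: "real \<times> real"
  assumes hfin: "\<And>x. x \<in> closed_segment a b \<Longrightarrow> \<bar>h x\<bar> \<noteq> \<infinity>"
    and hinf: "\<And>x. x \<notin> closed_segment a b \<Longrightarrow> h x = \<infinity>"
  shows "conjugate h (s1 + e * (snd a - snd b), s2 + e * (fst b - fst a))
       = conjugate h (s1, s2) + ereal (e * ((snd a - snd b) * fst a + (fst b - fst a) * snd a))"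
proof -
  let ?c = "e * ((snd a - snd b) * fst a + (fst b - fst a) * snd a)"
  have pt: "ereal ((s1 + e * (snd a - snd b)) * fst x + (s2 + e * (fst b - fst a)) * snd x) - h x
      = (ereal (s1 * fst x + s2 * snd x) - h x) + ereal ?c" for x
  proof (cases "x \<in> closed_segment a b")
    case True
    then obtain r where r: "h x = ereal r" using hfin[OF True] by (cases "h x") auto
    have "(s1 + e * (snd a - snd b)) * fst x + (s2 + e * (fst b - fst a)) * snd x
        = s1 * fst x + s2 * snd x + e * ((snd a - snd b) * fst x + (fst b - fst a) * snd x)"
      by (simp add: algebra_simps)
    also have "\<dots> = s1 * fst x + s2 * snd x + ?c" using seg_const[OF True] by simp
    finally show ?thesis by (simp add: r)
  next
    case False
    then show ?thesis using hinf[OF False] by simp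
  qed
  show ?thesis unfolding conjugate_def fst_conv snd_conv pt
    by (rule SUP_ereal_add_left) auto
qed

lemma ev_in:
  fixes f :: "real \<Rightarrow> real \<times> real"
  assumes "open U" "s0 \<in> U" "isCont f 0" "f 0 = s0"
  shows "eventually (\<lambda>e. f e \<in> U) (at 0)"
proof -
  have "(f \<longlongrightarrow> s0) (at 0)" using assms(3,4) by (simp add: isCont_def)
  then show ?thesis using assms(1,2) by (rule topological_tendstoD)
qed

lemma alg:
  fixes z11 z12 z22 z10 z01 z00 v1 v2 c e p1 p2 :: real
  defines "Q \<equiv> \<lambda>x y. z11 * x\<^sup>2 + z12 * x * y + z22 * y\<^sup>2 + z10 * x + z01 * y + z00"
  assumes E1: "Q (p1 + e * v1) (p2 + e * v2) = Q p1 p2 + e * c"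
    and E2: "Q (p1 + e + e * v1) (p2 + e * v2) = Q (p1 + e) p2 + e * c"
    and E3: "Q (p1 + e * v1) (p2 + e + e * v2) = Q p1 (p2 + e) + e * c"
    and e: "e \<noteq> 0" and v: "v1 \<noteq> 0 \<or> v2 \<noteq> 0"
  shows "z12\<^sup>2 - 4 * z11 * z22 = 0"
proof -
  have A: "e * e * (2 * z11 * v1 + z12 * v2) = 0"
    using E1 E2 unfolding Q_def by (simp add: power2_eq_square algebra_simps)
  have B: "e * e * (z12 * v1 + 2 * z22 * v2) = 0"
    using E1 E3 unfolding Q_def by (simp add: power2_eq_square algebra_simps)
  have A': "2 * z11 * v1 + z12 * v2 = 0" using A e by simp
  have B': "z12 * v1 + 2 * z22 * v2 = 0" using B e by simp
  have "v1 * (z12\<^sup>2 - 4 * z11 * z22) = z12 * (z12 * v1 + 2 * z22 * v2) - 2 * z22 * (2 * z11 * v1 + z12 * v2)"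
    by (simp add: power2_eq_square algebra_simps)
  hence C1: "v1 * (z12\<^sup>2 - 4 * z11 * z22) = 0" using A' B' by simp
  have "v2 * (z12\<^sup>2 - 4 * z11 * z22) = z12 * (2 * z11 * v1 + z12 * v2) - 2 * z11 * (z12 * v1 + 2 * z22 * v2)"
    by (simp add: power2_eq_square algebra_simps)
  hence C2: "v2 * (z12\<^sup>2 - 4 * z11 * z22) = 0" using A' B' by simp
  show ?thesis using C1 C2 v by auto
qed


theorem proposition4:
  fixes \<xi>01 \<xi>02 \<xi>00 \<xi>11 \<xi>12 \<xi>10 \<xi>21 \<xi>22 \<xi>20 m q :: real
    and a b :: "real \<times> real"
    and E :: "(real \<times> real) set"
    and h :: "real \<times> real \<Rightarrow> ereal"
    and U :: "(real \<times> real) set"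
    and \<zeta>11 \<zeta>12 \<zeta>22 \<zeta>10 \<zeta>01 \<zeta>00 :: real
  assumes seg: "E = closed_segment a b" "a \<noteq> b"
    and on_line: "snd a = m * fst a + q" "snd b = m * fst b + q"
    and slope: "\<xi>21 + m * \<xi>22 = 0"
    and pos: "\<forall>x\<in>E. aff \<xi>21 \<xi>22 \<xi>20 x > 0"
    and h_def: "\<forall>x. h x = ereal ((aff \<xi>11 \<xi>12 \<xi>10 x)\<^sup>2 / aff \<xi>21 \<xi>22 \<xi>20 x
                                 + aff \<xi>01 \<xi>02 \<xi>00 x) + ind_set E x"
    and piece: "open U" "U \<noteq> {}"
    and quad: "\<forall>s\<in>U. conjugate h s = ereal (\<zeta>11 * (fst s)\<^sup>2 + \<zeta>12 * fst s * snd s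
                 + \<zeta>22 * (snd s)\<^sup>2 + \<zeta>10 * fst s + \<zeta>01 * snd s + \<zeta>00)"
  shows "\<zeta>12\<^sup>2 - 4 * \<zeta>11 * \<zeta>22 = 0"
proof -
  define v1 where "v1 = snd a - snd b"
  define v2 where "v2 = fst b - fst a"
  define c where "c = v1 * fst a + v2 * snd a"
  define Q where "Q = (\<lambda>x y. \<zeta>11 * x\<^sup>2 + \<zeta>12 * x * y + \<zeta>22 * y\<^sup>2 + \<zeta>10 * x + \<zeta>01 * y + \<zeta>00)"
  have hfin: "\<bar>h x\<bar> \<noteq> \<infinity>" if "x \<in> closed_segment a b" for x
    using that h_def[rule_format, of x] seg by (simp add: ind_set_def)
  have hinf: "h x = \<infinity>" if "x \<notin> closed_segment a b" for x
    using that h_def[rule_format, of x] seg by (simp add: ind_set_def)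
  have key: "Q (x1 + e * v1) (x2 + e * v2) = Q x1 x2 + e * c"
    if "(x1, x2) \<in> U" "(x1 + e * v1, x2 + e * v2) \<in> U" for x1 x2 e
  proof -
    have "conjugate h (x1 + e * v1, x2 + e * v2) = conjugate h (x1, x2) + ereal (e * c)"
      unfolding v1_def v2_def c_def by (rule conj_shift[OF hfin hinf])
    then show ?thesis using quad that by (simp add: Q_def)
  qed
  obtain s0 where s0: "s0 \<in> U" using piece(2) by auto
  obtain p1 p2 where p: "s0 = (p1, p2)" by (cases s0)
  have ev: "\<forall>\<^sub>F e in at 0. (p1 + e * v1, p2 + e * v2) \<in> U \<and> (p1 + e, p2) \<in> U
      \<and> (p1 + e + e * v1, p2 + e * v2) \<in> U \<and> (p1, p2 + e) \<in> U
      \<and> (p1 + e * v1, p2 + e + e * v2) \<in> U"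
    by (intro eventually_conj ev_in[OF piece(1) s0]; simp add: p)
  then obtain d where d: "d > 0" and dP: "\<And>x. x \<noteq> 0 \<Longrightarrow> dist x 0 < d \<Longrightarrow>
      (p1 + x * v1, p2 + x * v2) \<in> U \<and> (p1 + x, p2) \<in> U
      \<and> (p1 + x + x * v1, p2 + x * v2) \<in> U \<and> (p1, p2 + x) \<in> U
      \<and> (p1 + x * v1, p2 + x + x * v2) \<in> U"
    unfolding eventually_at by auto
  define e where "e = d / 2"
  have e: "e \<noteq> 0" "dist e 0 < d" using d by (auto simp: e_def dist_real_def)
  note P = dP[OF e]
  have s0U: "(p1, p2) \<in> U" using s0 p by simp
  have E1: "Q (p1 + e * v1) (p2 + e * v2) = Q p1 p2 + e * c" using key s0U P by blast
  have E2: "Q (p1 + e + e * v1) (p2 + e * v2) = Q (p1 + e) p2 + e * c"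
    using key[of "p1 + e" p2 e] P by (simp add: add.assoc)
  have E3: "Q (p1 + e * v1) (p2 + e + e * v2) = Q p1 (p2 + e) + e * c"
    using key[of p1 "p2 + e" e] P by (simp add: add.assoc add.commute add.left_commute)
  have v: "v1 \<noteq> 0 \<or> v2 \<noteq> 0" using seg(2) unfolding v1_def v2_def
    by (metis eq_iff_diff_eq_0 prod_eq_iff)
  show ?thesis by (rule alg[OF E1[unfolded Q_def] E2[unfolded Q_def] E3[unfolded Q_def] e(1) v])
qed

end
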